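(* Let $q\in(0,1)$, let $a_n,b_n,c_n$ be the recurrence coefficients of the little $q$-Legendre polynomials and $P_1(x)=(x-b_0)/a_0=(q+1)x-q$. Let $K:=\left\lceil\frac{\log4}{\log\frac{1}{q}}-1\right\rceil$ and, for all $n,k\in\mathbb{N}_0$, \[A_n(k):=\frac{[b_{k+1}-P_1(1-q^n)][b_{k+2}-P_1(1-q^n)]}{a_{k+1}c_{k+2}},\qquad B_n(k):=\frac{[b_{n+k+1}-P_1(1-q^n)]q^k}{c_{n+k+1}}.\] Then $A_n(n+k)>4$ and $B_n(k)>\frac{1}{2q}$ for all $n\in\mathbb{N}_0$ and all $k\in\mathbb{N}_0$ with $k\ge K$. Moreover, $\lim_{k\to\infty}B_n(k)=\frac1q$ for every $n\in\mathbb{N}_0$.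
   Context: For $q\in(0,1)$ the recurrence coefficients are $a_0=\frac{1}{q+1}$, $b_0=\frac{q}{q+1}$, and for $n\ge1$: $a_n=q^n\frac{(1+q)(1-q^{n+1})}{(1-q^{2n+1})(1+q^{n+1})}$, $c_n=q^n\frac{(1+q)(1-q^n)}{(1-q^{2n+1})(1+q^n)}$, $b_n=\frac{(1-q^n)(1-q^{n+1})}{(1+q^n)(1+q^{n+1})}$. *)

theory Defs
  imports Complex_Main
begin

text \<open>Recurrence coefficients of the little q-Legendre polynomials (q in (0,1)).
  c_0 is not used; we set it to 0 by convention.\<close>

definition lqa :: "real \<Rightarrow> nat \<Rightarrow> real" where
  "lqa q n = (if n = 0 then 1 / (q + 1)
     else q ^ n * ((1 + q) * (1 - q ^ (n + 1))) / ((1 - q ^ (2 * n + 1)) * (1 + q ^ (n + 1))))"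

definition lqb :: "real \<Rightarrow> nat \<Rightarrow> real" where
  "lqb q n = (if n = 0 then q / (q + 1)
     else ((1 - q ^ n) * (1 - q ^ (n + 1))) / ((1 + q ^ n) * (1 + q ^ (n + 1))))"

definition lqc :: "real \<Rightarrow> nat \<Rightarrow> real" where
  "lqc q n = (if n = 0 then 0
     else q ^ n * ((1 + q) * (1 - q ^ n)) / ((1 - q ^ (2 * n + 1)) * (1 + q ^ n)))"

definition P1 :: "real \<Rightarrow> real \<Rightarrow> real" where
  "P1 q x = (x - lqb q 0) / lqa q 0"

definition Kq :: "real \<Rightarrow> int" where
  "Kq q = \<lceil>ln 4 / ln (1 / q) - 1\<rceil>"

definition An :: "real \<Rightarrow> nat \<Rightarrow> nat \<Rightarrow> real" where
  "An q n k = ((lqb q (k + 1) - P1 q (1 - q ^ n)) * (lqb q (k + 2) - P1 q (1 - q ^ n)))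
              / (lqa q (k + 1) * lqc q (k + 2))"

definition Bn :: "real \<Rightarrow> nat \<Rightarrow> nat \<Rightarrow> real" where
  "Bn q n k = ((lqb q (n + k + 1) - P1 q (1 - q ^ n)) * q ^ k) / lqc q (n + k + 1)"

end

theory Submission
  imports Defs
begin

lemma P1_eq: "0 < q \<Longrightarrow> P1 q (1 - q^n) = 1 - (1+q)*q^n"
  unfolding P1_def lqa_def lqb_def by (simp add: field_simps)

lemma b_eq:
  fixes q :: real assumes q: "0<q" "q<1" and m: "m \<noteq> 0"
  shows "lqb q m - P1 q (1 - q^n) = (1+q)*(q^n - 2*q^m/((1+q^m)*(1+q*q^m)))"
proof -
  have e1: "q^(m+1) = q*q^m" by simp
  have "lqb q m = (1 - q^m)*(1 - q*q^m)/((1+q^m)*(1+q*q^m))"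
    by (simp only: lqb_def e1 if_not_P[OF m])
  moreover have "0 < q^m" using q by simp
  moreover have "\<And>y. 0 < y \<Longrightarrow> (1 - y)*(1 - q*y)/((1+y)*(1+q*y)) - (1 - (1+q)*q^n)
     = (1+q)*(q^n - 2*y/((1+y)*(1+q*y)))"
  proof -
    fix y :: real assume y: "0 < y"
    have "0 < (1+y)*(1+q*y)" using y q by (simp add: add_pos_pos)
    then show "(1 - y)*(1 - q*y)/((1+y)*(1+q*y)) - (1 - (1+q)*q^n)
     = (1+q)*(q^n - 2*y/((1+y)*(1+q*y)))" by (simp add: field_simps)
  qed
  ultimately show ?thesis using q by (simp add: P1_eq)
qed

lemma a_eq:
  fixes q :: real assumes m: "m \<noteq> 0"
  shows "lqa q m = q^m*((1+q)*(1-q*q^m))/((1-q*(q^m)^2)*(1+q*q^m))"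
proof -
  have e1: "q^(m+1) = q*q^m" by simp
  have e2: "q^(2*m+1) = q*(q^m)^2" by (simp add: power_mult mult_ac)
  show ?thesis by (simp only: lqa_def e1 e2 if_not_P[OF m])
qed

lemma c_eq:
  fixes q :: real assumes m: "m \<noteq> 0"
  shows "lqc q m = q^m*((1+q)*(1-q^m))/((1-q*(q^m)^2)*(1+q^m))"
proof -
  have e2: "q^(2*m+1) = q*(q^m)^2" by (simp add: power_mult mult_ac)
  show ?thesis by (simp only: lqc_def e2 if_not_P[OF m])
qed

lemma Bform_alg:
  fixes D q x t E F G :: real
  assumes "D \<noteq> 0" "q \<noteq> 0" "x \<noteq> 0" "t \<noteq> 0" "E \<noteq> 0" "F \<noteq> 0" "G \<noteq> 0" "1+q \<noteq> 0"
  shows "((1+q)*(x/t - 2*x/D) * (t/q)) / (x*((1+q)*F)/(E*G)) = (1/q)*(1 - 2*t/D)*(E*G/F)"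
proof -
  have 1: "(x/t - 2*x/D) * (t/q) = x*(1 - 2*t/D)/q" using assms by (simp add: field_simps)
  have 2: "\<And>w r. r \<noteq> 0 \<Longrightarrow> r*(x*w/q) / (x*(r*F)/(E*G)) = (1/q)*w*(E*G/F)"
    using assms by (simp add: field_simps)
  show ?thesis using 2[OF assms(8)] by (simp only: mult.assoc 1)
qed

lemma Bn_form:
  fixes q :: real and n k :: nat assumes q: "0<q" "q<1"
  defines "t \<equiv> q^(k+1)" and "x \<equiv> q^(n+k+1)"
  shows "Bn q n k = (1/q) * (1 - 2*t/((1+x)*(1+q*x))) * ((1 - q*x^2)*(1+x)/(1-x))"
proof -
  have tk: "q^k = t/q" unfolding t_def using q by simp
  have xn: "x = q^n * t" unfolding x_def t_def by (simp add: power_add)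
  have xp: "0<x" "x<1" unfolding x_def using q power_Suc_less_one[of q "n+k"] by auto
  have tp: "0 < t" unfolding t_def using q by simp
  have d1: "1 - q*x^2 \<noteq> 0" using q xp
    by (smt (verit) mult_less_cancel_left1 mult_pos_pos power2_eq_square) 
  have d2: "1 + q*x \<noteq> 0" using q xp by (smt (verit) mult_pos_pos)
  have "Bn q n k = ((1+q)*(q^n - 2*x/((1+x)*(1+q*x))) * (t/q)) / (x*((1+q)*(1-x))/((1-q*x^2)*(1+x)))"
    unfolding Bn_def using q by (simp only: b_eq c_eq tk x_def[symmetric] add_is_0 one_neq_zero simp_thms)
  also have "\<dots> = (1/q) * (1 - 2*t/((1+x)*(1+q*x))) * ((1 - q*x^2)*(1+x)/(1-x))"
  proof -
    have D: "0 < (1+x)*(1+q*x)" using q xp by (simp add: add_pos_pos)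
    have E: "0 < 1 - q*x^2" using d1 q xp
      by (smt (verit, best) mult_less_cancel_left1 mult_pos_pos power2_eq_square)
    have s: "q^n = x/t" using xn tp by simp
    have F: "1 - x \<noteq> 0" "1 + x \<noteq> 0" "1 + q \<noteq> 0" "(1+x)*(1+q*x) \<noteq> 0" "1-q*x^2 \<noteq> 0" using xp q D E by auto
    show ?thesis unfolding s by (rule Bform_alg) (use q xp tp F in auto)
  qed
  finally show ?thesis .
qed

lemma Aform_core:
  fixes q x t E1 F1 H1 E2 F2 H2 r w1 w2 :: real
  assumes "q \<noteq> 0" "x \<noteq> 0" "t \<noteq> 0" "E1 \<noteq> 0" "F1 \<noteq> 0" "H1 \<noteq> 0"
    "E2 \<noteq> 0" "F2 \<noteq> 0" "H2 \<noteq> 0" "r \<noteq> 0"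
  shows "(r*((x/t)*w1)) * (r*((x/t)*w2)) / ((x*(r*F1)/(E1*H1)) * ((q*x)*(r*F2)/(E2*H2)))
    = (1/(q*t^2)) * (w1*w2) * ((E1*H1/F1)*(E2*H2/F2))"
proof -
  have "(r*((x/t)*w1)) * (r*((x/t)*w2)) = (r*x)*(r*x) * (w1*w2/(t*t))" by (simp add: mult_ac)
  moreover have "(x*(r*F1)/(E1*H1)) * ((q*x)*(r*F2)/(E2*H2)) = (r*x)*(r*x) * (q*(F1*F2)/((E1*H1)*(E2*H2)))"
    by (simp add: mult_ac)
  moreover have "r*x \<noteq> 0" using assms by simp
  ultimately have L: "(r*((x/t)*w1)) * (r*((x/t)*w2)) / ((x*(r*F1)/(E1*H1)) * ((q*x)*(r*F2)/(E2*H2)))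
     = (w1*w2/(t*t)) / (q*(F1*F2)/((E1*H1)*(E2*H2)))" by (simp add: mult_ac)
  show ?thesis unfolding L using assms by (simp add: field_simps power2_eq_square)
qed

lemma Aform_alg:
  fixes D1 D2 q x t E1 F1 H1 E2 F2 H2 r :: real
  assumes "D1 \<noteq> 0" "D2 \<noteq> 0" "q \<noteq> 0" "x \<noteq> 0" "t \<noteq> 0" "E1 \<noteq> 0" "F1 \<noteq> 0" "H1 \<noteq> 0"
    "E2 \<noteq> 0" "F2 \<noteq> 0" "H2 \<noteq> 0" "r \<noteq> 0"
  shows "(r*(x/t - 2*x/D1)) * (r*(x/t - 2*(q*x)/D2)) / ((x*(r*F1)/(E1*H1)) * ((q*x)*(r*F2)/(E2*H2)))
    = (1/(q*t^2)) * ((1-2*t/D1)*(1-2*(q*t)/D2)) * ((E1*H1/F1)*(E2*H2/F2))"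
proof -
  have 1: "x/t - 2*x/D1 = (x/t)*(1-2*t/D1)" using assms by (simp add: field_simps)
  have 2: "x/t - 2*(q*x)/D2 = (x/t)*(1-2*(q*t)/D2)" using assms by (simp add: field_simps)
  show ?thesis unfolding 1 2 by (rule Aform_core) (use assms in auto)
qed

lemma An_form:
  fixes q :: real and n k :: nat assumes q: "0<q" "q<1"
  defines "t \<equiv> q^(k+1)" and "x \<equiv> q^(n+k+1)"
  shows "An q n (n+k) = (1/(q*t^2)) * ((1-2*t/((1+x)*(1+q*x)))*(1-2*(q*t)/((1+q*x)*(1+q*(q*x)))))
     * (((1-q*x^2)*(1+q*x)/(1-q*x))*((1-q*(q*x)^2)*(1+q*x)/(1-q*x)))"
proof -
  have xn: "x = q^n * t" unfolding x_def t_def by (simp add: power_add)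
  have y: "q^(n+k+2) = q*x" unfolding x_def by simp
  have xp: "0<x" "x<1" unfolding x_def using q power_Suc_less_one[of q "n+k"] by auto
  have tp: "0 < t" unfolding t_def using q by simp
  have s: "q^n = x/t" using xn tp by simp
  have qx1: "q*x < 1*x" using q xp by (intro mult_strict_right_mono) auto
  have qx: "0 < q*x" "q*x < 1" using q xp apply simp using qx1 xp by linarith
  have pos: "0 < 1 - q*z^2" if z: "0 < z" "z < 1" for z
  proof -
    have z2: "z^2 < 1" using z power_strict_mono[of z 1 2] by simp
    have "q*z^2 < 1*1" using q z2 by (intro mult_strict_mono) auto
    then show ?thesis by simp
  qed
  have "An q n (n+k) = ((1+q)*(q^n - 2*x/((1+x)*(1+q*x)))) * ((1+q)*(q^n - 2*(q*x)/((1+(q*x))*(1+q*(q*x)))))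
     / ((x*((1+q)*(1-q*x))/((1-q*x^2)*(1+q*x))) * ((q*x)*((1+q)*(1-(q*x)))/((1-q*(q*x)^2)*(1+(q*x)))))"
  proof -
    have nz: "n+k+1 \<noteq> 0" "n+k+2 \<noteq> 0" by simp_all
    show ?thesis unfolding An_def
      by (simp only: b_eq[OF q nz(1)] b_eq[OF q nz(2)] c_eq[OF nz(2)] a_eq[OF nz(1)] y x_def[symmetric])
  qed
  also have "\<dots> = (1/(q*t^2)) * ((1-2*t/((1+x)*(1+q*x)))*(1-2*(q*t)/((1+q*x)*(1+q*(q*x)))))
     * (((1-q*x^2)*(1+q*x)/(1-q*x))*((1-q*(q*x)^2)*(1+q*x)/(1-q*x)))"
  proof -
    have "0 < q*(q*x)" using q qx by simp
    then have h: "1 + q*x \<noteq> 0" "1 + q*(q*x) \<noteq> 0" "(1+x)*(1+q*x) \<noteq> 0" "(1+q*x)*(1+q*(q*x)) \<noteq> 0"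
      using qx xp by (smt (verit) mult_pos_pos)+
    show ?thesis unfolding s using q xp tp qx pos[of x] pos[of "q*x"] h by (intro Aform_alg) auto
  qed
  finally show ?thesis .
qed

lemma W_bound:
  fixes u D :: real assumes "0 < u" "u \<le> 1/4" "1 < D"
  shows "1/2 < 1 - 2*u/D"
proof -
  have "2*u/D < 2*u" using assms by (simp add: divide_less_eq)
  then show ?thesis using assms by linarith
qed

lemma F_bound:
  fixes q z :: real assumes "0 < q" "q < 1" "0 < z" "z < 1"
  shows "1 < (1-q*z^2)*(1+z)/(1-z)"
proof -
  have "q*z^2*(1+z) < z*2"
  proof -
    have "z^2 < z" using assms by (simp add: power2_eq_square)
    moreover have "q*z^2 < 1*z^2" using assms by (intro mult_strict_right_mono) auto
    ultimately have a: "q*z^2 < z" by simp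
    have b: "1 + z < 2" using assms by simp
    show ?thesis using mult_strict_mono[OF a b] assms by simp
  qed
  then show ?thesis using assms by (simp add: field_simps)
qed

lemma t_bound:
  fixes q :: real assumes q: "0<q" "q<1" and k: "int k \<ge> Kq q"
  shows "q^(k+1) \<le> 1/4"
proof -
  have l0: "ln (1/q) = - ln q" using q by (simp add: ln_div)
  have l1: "ln q < 0" using q by simp
  have l: "0 < ln (1/q)" using l0 l1 by simp
  have c1: "\<lceil>ln 4 / ln (1/q)\<rceil> - 1 \<le> int k" using k by (simp add: Kq_def)
  have c2: "real_of_int (\<lceil>ln 4 / ln (1/q)\<rceil> - 1) \<le> real k"
    using c1 by (metis of_int_le_iff of_int_of_nat_eq)
  have "ln 4 / ln (1/q) - 1 \<le> real k"
    using c2 le_of_int_ceiling[of "ln 4 / ln (1/q)"] by linarith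
  then have "ln 4 / ln (1/q) \<le> real k + 1" by linarith
  then have "ln 4 \<le> (real k + 1) * ln (1/q)" using l by (simp add: divide_le_eq)
  moreover have "ln (q^(k+1)) = real (k+1) * ln q" by (rule ln_realpow)
  moreover have "ln (1/4::real) = - ln 4" by (simp add: ln_div)
  ultimately have "ln (q^(k+1)) \<le> ln (1/4)" unfolding l0 by (simp add: algebra_simps)
  then show ?thesis using q by (subst (asm) ln_le_cancel_iff) auto
qed

lemma F_bound2:
  fixes q x :: real assumes "0 < q" "q < 1" "0 < x" "x < 1"
  shows "1 < (1-q*x^2)*(1+q*x)/(1-q*x)"
proof -
  have qx1: "q*x < 1*1" using assms by (intro mult_strict_mono) auto
  have b: "1 + q*x < 2" using qx1 by simp
  have c: "x*(1+q*x) < 1*2" using assms b by (intro mult_strict_mono) auto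
  have d: "x*(x*(1+q*x)) < x*2" using c assms by (intro mult_strict_left_mono) auto
  have e: "q*(x*(x*(1+q*x))) < q*(x*2)" using d assms by (intro mult_strict_left_mono) auto
  have "0 < 1 - q*x" using qx1 by simp
  then show ?thesis using e by (simp add: field_simps power2_eq_square)
qed

theorem lemma2p4:
  fixes q :: real
  assumes "0 < q" and "q < 1"
  shows "(\<forall>n k. int k \<ge> Kq q \<longrightarrow> An q n (n + k) > 4 \<and> Bn q n k > 1 / (2 * q))
         \<and> (\<forall>n. (\<lambda>k. Bn q n k) \<longlonglongrightarrow> 1 / q)"
proof (intro conjI allI impI)
  fix n k :: nat assume K: "int k \<ge> Kq q"
  have q: "0 < q" "q < 1" using assms by auto
  define t where "t = q^(k+1)"
  define x where "x = q^(n+k+1)"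
  have t4: "t \<le> 1/4" unfolding t_def using t_bound[OF q K] .
  have tp: "0 < t" unfolding t_def using q by simp
  have xp: "0<x" "x<1" unfolding x_def using q power_Suc_less_one[of q "n+k"] by auto
  have qx1: "q*x < 1*1" using q xp by (intro mult_strict_mono) auto
  have qx: "0 < q*x" "q*x < 1" using q xp qx1 by simp_all
  have qqx: "0 < q*(q*x)" using q qx by simp
  have D1: "1 < (1+x)*(1+q*x)"
  proof -
    have "1*1 < (1+x)*(1+q*x)" using xp qx by (intro mult_strict_mono) auto
    then show ?thesis by simp
  qed
  have D2: "1 < (1+q*x)*(1+q*(q*x))"
  proof -
    have "1*1 < (1+q*x)*(1+q*(q*x))" using qqx qx by (intro mult_strict_mono) auto
    then show ?thesis by simp
  qed
  have W1: "1/2 < 1 - 2*t/((1+x)*(1+q*x))" using W_bound[OF tp t4 D1] .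
  have qt: "0 < q*t" "q*t \<le> 1/4"
  proof -
    show "0 < q*t" using q tp by simp
    have "q*t \<le> 1*t" using q tp by (intro mult_right_mono) auto
    then show "q*t \<le> 1/4" using t4 by simp
  qed
  have W2: "1/2 < 1 - 2*(q*t)/((1+q*x)*(1+q*(q*x)))" using W_bound[OF qt D2] .
  have F0: "1 < (1-q*x^2)*(1+x)/(1-x)" using F_bound[OF q xp] .
  have F1: "1 < (1-q*x^2)*(1+q*x)/(1-q*x)" using F_bound2[OF q xp] .
  have F2: "1 < (1-q*(q*x)^2)*(1+q*x)/(1-q*x)" using F_bound[OF q qx] .
  show "Bn q n k > 1 / (2 * q)"
  proof -
    have "1/2 * 1 < (1 - 2*t/((1+x)*(1+q*x))) * ((1-q*x^2)*(1+x)/(1-x))"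
      using W1 F0 by (intro mult_strict_mono) auto
    then have "(1/q) * (1/2) < (1/q) * ((1 - 2*t/((1+x)*(1+q*x))) * ((1-q*x^2)*(1+x)/(1-x)))"
      using q by (intro mult_strict_left_mono) auto
    then show ?thesis unfolding Bn_form[OF q] t_def[symmetric] x_def[symmetric]
      by (simp add: mult.assoc)
  qed
  show "An q n (n + k) > 4"
  proof -
    have G1: "1/2 * (1/2) < (1 - 2*t/((1+x)*(1+q*x))) * (1 - 2*(q*t)/((1+q*x)*(1+q*(q*x))))"
      using W1 W2 by (intro mult_strict_mono) auto
    have G2: "1 * 1 < ((1-q*x^2)*(1+q*x)/(1-q*x)) * ((1-q*(q*x)^2)*(1+q*x)/(1-q*x))"
      using F1 F2 by (intro mult_strict_mono) auto
    have t2: "t^2 \<le> (1/4)^2" using t4 tp by (intro power_mono) auto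
    have qt3: "q*t^2 < 1*t^2" using q tp by (intro mult_strict_right_mono) auto
    have qt2: "q*t^2 < 1*(1/4)^2" using qt3 t2 by simp
    have P: "16 < 1/(q*t^2)"
    proof -
      have "0 < q*t^2" using q tp by simp
      then show ?thesis using qt2 by (simp add: field_simps)
    qed
    have H: "16 * (1/4) < (1/(q*t^2)) * ((1 - 2*t/((1+x)*(1+q*x))) * (1 - 2*(q*t)/((1+q*x)*(1+q*(q*x)))))"
      (is "_ < ?P")
      using P G1 q tp by (intro mult_strict_mono) auto
    have Hp: "0 < ?P" using H by linarith
    have "16 * (1/4) * 1 < (1/(q*t^2)) * ((1 - 2*t/((1+x)*(1+q*x))) * (1 - 2*(q*t)/((1+q*x)*(1+q*(q*x)))))
       * (((1-q*x^2)*(1+q*x)/(1-q*x)) * ((1-q*(q*x)^2)*(1+q*x)/(1-q*x)))"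
      using mult_strict_mono[OF H G2 Hp] by simp
    then show ?thesis unfolding An_form[OF q] t_def[symmetric] x_def[symmetric] by simp
  qed
next
  fix n :: nat
  have q: "0 < q" "q < 1" using assms by auto
  have L0: "(\<lambda>k. q^k) \<longlonglongrightarrow> 0" using q by (intro LIMSEQ_power_zero) auto
  have T: "(\<lambda>k. q * q^k) \<longlonglongrightarrow> 0" using tendsto_mult_right_zero[OF L0] by simp
  have X: "(\<lambda>k. q^(n+1) * q^k) \<longlonglongrightarrow> 0" using tendsto_mult_right_zero[OF L0] by simp
  have eq: "(\<lambda>k. Bn q n k) = (\<lambda>k. (1/q) * (1 - 2*(q*q^k)/((1+q^(n+1)*q^k)*(1+q*(q^(n+1)*q^k))))
      * ((1 - q*(q^(n+1)*q^k)^2)*(1+q^(n+1)*q^k)/(1-q^(n+1)*q^k)))"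
  proof
    fix k
    have a: "q^(k+1) = q*q^k" "q^(n+k+1) = q^(n+1)*q^k" by (simp_all add: power_add)
    show "Bn q n k = (1/q) * (1 - 2*(q*q^k)/((1+q^(n+1)*q^k)*(1+q*(q^(n+1)*q^k))))
      * ((1 - q*(q^(n+1)*q^k)^2)*(1+q^(n+1)*q^k)/(1-q^(n+1)*q^k))"
      using Bn_form[OF q, of n k] unfolding a .
  qed
  have "(\<lambda>k. Bn q n k) \<longlonglongrightarrow> (1/q) * (1 - 2*0/((1+0)*(1+q*0))) * ((1 - q*0^2)*(1+0)/(1-0))"
    unfolding eq by (intro tendsto_intros T X) auto
  then show "(\<lambda>k. Bn q n k) \<longlonglongrightarrow> 1 / q" by simp
qed

end
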